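(* Let $R:\mathbb{C}^{N_s}\to\mathbb{R}$ be the function $$R(\boldsymbol{\theta})=\sum_{k=1}^K\omega_k\Big[\log\det(\sigma_0^2\mathbf{I}+\mathbf{H}_k(\boldsymbol{\theta})\bar{\mathbf{W}}\mathbf{H}_k(\boldsymbol{\theta})^{\mathsf H})-\log\det(\sigma_0^2\mathbf{I}+\mathbf{H}_k(\boldsymbol{\theta})\bar{\mathbf{W}}_k\mathbf{H}_k(\boldsymbol{\theta})^{\mathsf H})\Big],$$ where $\mathbf{H}_k(\boldsymbol{\theta})=\mathbf{D}_k+\mathbf{U}_k\mathrm{diag}(\boldsymbol{\theta})\mathbf{G}$, $\bar{\mathbf{W}}=\sum_{j}\mathbf{W}_j\mathbf{W}_j^{\mathsf H}$, $\bar{\mathbf{W}}_k=\sum_{j\neq k}\mathbf{W}_j\mathbf{W}_j^{\mathsf H}$ for fixed matrices $\mathbf{G}\in\mathbb{C}^{N_s\times N_t}$, $\mathbf{U}_k\in\mathbb{C}^{N_r\times N_s}$, $\mathbf{D}_k\in\mathbb{C}^{N_r\times N_t}$, $\mathbf{W}_k\in\mathbb{C}^{N_t\times N_d}$, $\sigma_0^2>0$ and weights $\omega_k$. Let $\mathcal{Q}=\{\boldsymbol{\theta}\in\mathbb{C}^{N_s}:|\theta_n|=1,\ n=1,\dots,N_s\}$, let $\Pi_{\mathcal{Q}}$ denote the projection onto $\mathcal{Q}$, let $\boldsymbol{\theta}^{(\ell)}\in\mathcal{Q}$, and let $\boldsymbol{\Xi}=\mathrm{diag}\big(1/|\nabla_{\boldsymbol{\theta}}R(\boldsymbol{\theta}^{(\ell)})|\big)$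 (elementwise modulus and division). For a step size $\alpha>0$ set $\boldsymbol{\theta}(\alpha)=\Pi_{\mathcal{Q}}\big(\boldsymbol{\theta}^{(\ell)}+\alpha\boldsymbol{\Xi}\nabla_{\boldsymbol{\theta}}R(\boldsymbol{\theta}^{(\ell)})\big)$. Consider the backtracking line search that starts from an initial $\alpha=c>0$ and replaces $\alpha\leftarrow\eta\alpha$ (with fixed $0<\eta<1$) until $$R(\boldsymbol{\theta}(\alpha))\ge R(\boldsymbol{\theta}^{(\ell)})+\frac{\beta}{2N_s}\|\boldsymbol{\theta}(\alpha)-\boldsymbol{\theta}^{(\ell)}\|^2,$$ where $\beta>0$ is sufficiently small. Then this line search terminates after a finite number of steps, for any positive initial step size $c$.
   Context: The complex-valued gradient is $\nabla_{\boldsymbol{\theta}}R=\frac12\big(\frac{\partial R}{\partial\Re\{\boldsymbol{\theta}\}}+j\frac{\partial R}{\partial\Im\{\boldsymbol{\theta}\}}\big)$; $\mathrm{diag}(\mathbf{x})$ is the diagonal matrix with diagonal $\mathbf{x}$; $\|\cdot\|$ is the Euclidean norm; $\log$ is the natural logarithm. The procedure is the scaled projected gradient step for the RIS phase shifts $\boldsymbol{\theta}$ (unit-modulus constraint) in weighted sum-rate maximization for an RIS-aided downlink multiuser MIMO system with fixed precoders $\mathbf{W}_k$. *)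

theory Defs
  imports "HOL-Analysis.Analysis"
begin

definition herm :: "complex^'c^'r \<Rightarrow> complex^'r^'c" where
  "herm A = (\<chi> i j. cnj (A $ j $ i))"

definition diagm :: "complex^'n \<Rightarrow> complex^'n^'n" where
  "diagm x = (\<chi> i j. if i = j then x $ i else 0)"

definition idm :: "complex^'n^'n" where
  "idm = (\<chi> i j. if i = j then 1 else 0)"

definition chan :: "complex^'t^'r \<Rightarrow> complex^'s^'r \<Rightarrow> complex^'t^'s \<Rightarrow> complex^'s \<Rightarrow> complex^'t^'r" where
  "chan D U G \<theta> = D + U ** diagm \<theta> ** G"

text \<open>Natural log of the determinant of a matrix (applied only to Hermitian positive
  definite matrices, whose determinant is real and positive).\<close>
definition logdet :: "complex^'n^'n \<Rightarrow> real" where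
  "logdet M = ln (Re (det M))"

definition WSR :: "('k::finite \<Rightarrow> real) \<Rightarrow> real \<Rightarrow> ('k \<Rightarrow> complex^'t^'r)
   \<Rightarrow> ('k \<Rightarrow> complex^'s^'r) \<Rightarrow> complex^'t^'s \<Rightarrow> ('k \<Rightarrow> complex^'d^'t) \<Rightarrow> complex^'s \<Rightarrow> real" where
  "WSR \<omega> \<sigma>0 D U G W \<theta> =
     (\<Sum>k\<in>UNIV. \<omega> k *
        (logdet ((\<sigma>0^2) *\<^sub>R idm
                 + chan (D k) (U k) G \<theta> ** (\<Sum>j\<in>UNIV. W j ** herm (W j)) ** herm (chan (D k) (U k) G \<theta>))
       - logdet ((\<sigma>0^2) *\<^sub>R idm
                 + chan (D k) (U k) G \<theta> ** (\<Sum>j\<in>UNIV - {k}. W j ** herm (W j)) ** herm (chan (D k) (U k) G \<theta>))))"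

text \<open>Complex-valued (Wirtinger-type) gradient:
  grad f theta \$ n = 1/2 (dR/dRe theta_n + j dR/dIm theta_n).\<close>
definition cgrad :: "(complex^'n \<Rightarrow> real) \<Rightarrow> complex^'n \<Rightarrow> complex^'n" where
  "cgrad f \<theta> = (\<chi> n. (1/2) * (complex_of_real (deriv (\<lambda>t. f (\<theta> + (complex_of_real t) *s axis n 1)) 0)
                      + \<i> * complex_of_real (deriv (\<lambda>t. f (\<theta> + (\<i> * complex_of_real t) *s axis n 1)) 0)))"

definition unitmod :: "(complex^'n) set" where
  "unitmod = {\<theta>. \<forall>n. cmod (\<theta> $ n) = 1}"

text \<open>Projection onto Q: any selection of nearest points of Q.\<close>
definition is_proj_Q :: "(complex^'n \<Rightarrow> complex^'n) \<Rightarrow> bool" where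
  "is_proj_Q P \<longleftrightarrow> (\<forall>x. P x \<in> unitmod \<and> (\<forall>q\<in>unitmod. norm (x - P x) \<le> norm (x - q)))"

definition Xi :: "complex^'n \<Rightarrow> complex^'n^'n" where
  "Xi g = diagm (\<chi> n. complex_of_real (1 / cmod (g $ n)))"

end

theory Submission
  imports Defs
begin


lemma bl_axis: "bounded_linear (axis i :: 'a::real_normed_vector \<Rightarrow> 'a^'n)"
proof (rule bounded_linear_intro[where K=1])
  show "axis i (x + y) = axis i x + axis i y" for x y :: 'a
    by (simp add: axis_def vec_eq_iff)
  show "axis i (r *\<^sub>R x) = r *\<^sub>R axis i x" for r x
    by (simp add: axis_def vec_eq_iff)
  show "norm (axis i x) \<le> norm x * 1" for x :: 'a
  proof -
    have "norm (axis i x) = sqrt ((\<Sum>j\<in>UNIV. (norm (axis i x $ j))\<^sup>2))"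
      by (simp add: norm_vec_def L2_set_def)
    also have "(\<Sum>j\<in>UNIV. (norm (axis i x $ j))\<^sup>2) = (\<Sum>j\<in>UNIV. if j = i then (norm x)\<^sup>2 else 0)"
      by (intro sum.cong) (auto simp: axis_def)
    also have "\<dots> = (norm x)\<^sup>2" by simp
    finally show ?thesis by simp
  qed
qed

lemma vec_lambda_axis_sum: "(\<chi> i. f i) = (\<Sum>i\<in>UNIV. axis i (f i))"
  by (simp add: vec_eq_iff axis_def sum_component if_distrib cong: if_cong)

lemma diff_bl:
  assumes "bounded_linear h" "f differentiable F"
  shows "(\<lambda>x. h (f x)) differentiable F"
  using assms unfolding differentiable_def by (metis bounded_linear.has_derivative)

lemma diff_vec_lambda:
  assumes "\<And>i. (\<lambda>x. f x i) differentiable F"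
  shows "(\<lambda>x. \<chi> i. f x i) differentiable F"
proof -
  have "(\<lambda>x. \<Sum>i\<in>UNIV. axis i (f x i)) differentiable F"
    by (intro differentiable_sum ballI finite diff_bl[OF bl_axis] assms)
  then show ?thesis by (simp add: vec_lambda_axis_sum[symmetric])
qed

lemma diff_nth:
  assumes "f differentiable F"
  shows "(\<lambda>x. f x $ i) differentiable F"
  using diff_bl[OF bounded_linear_vec_nth assms] .

lemma diff_prod:
  fixes f :: "'i \<Rightarrow> 'a::real_normed_vector \<Rightarrow> 'b::real_normed_field"
  assumes "\<And>i. i \<in> I \<Longrightarrow> f i differentiable (at x)"
  shows "(\<lambda>x. \<Prod>i\<in>I. f i x) differentiable (at x)"
proof -
  have "\<forall>i\<in>I. \<exists>D. (f i has_derivative D) (at x)"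
    using assms unfolding differentiable_def by blast
  from bchoice[OF this] obtain D where D: "\<forall>i\<in>I. (f i has_derivative D i) (at x)"
    by blast
  have "((\<lambda>x. \<Prod>i\<in>I. f i x) has_derivative
     (\<lambda>y. \<Sum>i\<in>I. D i y * (\<Prod>j\<in>I - {i}. f j x))) (at x)"
    by (rule has_derivative_prod) (use D in blast)
  then show ?thesis
    unfolding differentiable_def by blast
qed

lemma diff_mmult:
  fixes f :: "'a::real_normed_vector \<Rightarrow> complex^'m^'n" and g :: "'a \<Rightarrow> complex^'p^'m"
  assumes "f differentiable (at x)" "g differentiable (at x)"
  shows "(\<lambda>x. f x ** g x) differentiable (at x)"
  unfolding matrix_matrix_mult_def
  by (intro diff_vec_lambda differentiable_sum ballI differentiable_mult diff_nth assms finite)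

lemma diff_herm:
  fixes f :: "'a::real_normed_vector \<Rightarrow> complex^'m^'n"
  assumes "f differentiable (at x)"
  shows "(\<lambda>x. herm (f x)) differentiable (at x)"
  unfolding herm_def
  by (intro diff_vec_lambda diff_bl[OF bounded_linear_cnj] diff_nth assms)

lemma diff_det:
  fixes f :: "'a::real_normed_vector \<Rightarrow> complex^'n^'n"
  assumes "f differentiable (at x)"
  shows "(\<lambda>x. det (f x)) differentiable (at x)"
  unfolding det_def
  by (intro differentiable_sum ballI differentiable_mult diff_prod diff_nth assms finite differentiable_const)

lemma diff_diagm: "(\<lambda>\<theta>. diagm \<theta>) differentiable (at x)"
  unfolding diagm_def
proof (intro diff_vec_lambda)
  fix i j
  show "(\<lambda>\<theta>::complex^'a. if i = j then \<theta> $ i else 0) differentiable at x"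
    by (cases "i = j") (auto intro: diff_nth differentiable_ident)
qed

lemma diff_chan: "(\<lambda>\<theta>. chan D U G \<theta>) differentiable (at x)"
  unfolding chan_def
  by (intro differentiable_add differentiable_const diff_mmult diff_diagm)



definition hdot :: "complex^'n \<Rightarrow> complex^'n \<Rightarrow> complex" where
  "hdot x y = (\<Sum>i\<in>UNIV. cnj (x$i) * y$i)"

lemma hdot_adj: "hdot x (A *v y) = hdot (herm A *v x) y"
  unfolding hdot_def matrix_vector_mult_def herm_def
  by (simp add: sum_distrib_left sum_distrib_right mult_ac) (rule sum.swap)

lemma herm_mult: "herm (A ** B) = herm B ** herm A"
  by (simp add: herm_def matrix_matrix_mult_def vec_eq_iff mult.commute)

lemma herm_herm[simp]: "herm (herm A) = A"
  by (simp add: herm_def vec_eq_iff)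

lemma herm_add: "herm (A + B) = herm A + herm B"
  by (simp add: herm_def vec_eq_iff)

lemma herm_scaleR: "herm (c *\<^sub>R A) = c *\<^sub>R herm A"
  by (simp add: herm_def vec_eq_iff)

lemma herm_idm: "herm idm = idm"
  by (simp add: herm_def idm_def vec_eq_iff)

lemma herm_sum: "herm (\<Sum>j\<in>J. A j) = (\<Sum>j\<in>J. herm (A j))"
  by (simp add: herm_def vec_eq_iff sum_component)

lemma det_herm: "det (herm A) = cnj (det A)"
proof -
  have "herm A = transpose (\<chi> i j. cnj (A$i$j))"
    by (simp add: herm_def transpose_def vec_eq_iff)
  then have "det (herm A) = det (\<chi> i j. cnj (A$i$j))" by simp
  also have "\<dots> = cnj (det A)"
    unfolding det_def by simp
  finally show ?thesis .
qed

lemma hdot_self: "hdot x x = of_real ((norm x)\<^sup>2)"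
proof -
  have "hdot x x = (\<Sum>i\<in>UNIV. of_real ((cmod (x$i))\<^sup>2))"
    unfolding hdot_def by (intro sum.cong refl) (metis complex_norm_square mult.commute)
  also have "\<dots> = of_real ((norm x)\<^sup>2)"
    by (simp add: norm_vec_def L2_set_def sum_nonneg)
  finally show ?thesis .
qed

lemma mv_sum: "(\<Sum>j\<in>J. A j) *v x = (\<Sum>j\<in>J. A j *v x)"
  apply (simp add: vec_eq_iff matrix_vector_mult_def sum_component sum_distrib_right)
  by (intro allI sum.swap)

lemma hdot_sum: "hdot x (\<Sum>j\<in>J. y j) = (\<Sum>j\<in>J. hdot x (y j))"
  unfolding hdot_def by (simp add: sum_component sum_distrib_left) (rule sum.swap)

lemma hdot_add: "hdot x (y + z) = hdot x y + hdot x z"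
  unfolding hdot_def by (simp add: distrib_left sum.distrib)

lemma hdot_scaleR: "hdot x (c *\<^sub>R y) = c *\<^sub>R hdot x y"
  unfolding hdot_def by (simp add: scaleR_sum_right mult_scaleR_right)

lemma scaleR_mv: "(c *\<^sub>R A) *v x = c *\<^sub>R (A *v (x::complex^'n))"
  by (simp add: vec_eq_iff matrix_vector_mult_def scaleR_sum_right)

lemma psd_sum: "Re (hdot x ((\<Sum>j\<in>J. W j ** herm (W j)) *v x)) \<ge> 0"
proof -
  have "hdot x ((\<Sum>j\<in>J. W j ** herm (W j)) *v x) = (\<Sum>j\<in>J. hdot x (W j *v (herm (W j) *v x)))"
    by (simp add: mv_sum hdot_sum matrix_vector_mul_assoc)
  also have "\<dots> = (\<Sum>j\<in>J. of_real ((norm (herm (W j) *v x))\<^sup>2))"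
    by (intro sum.cong refl) (simp only: hdot_adj[of x "W _"] hdot_self)
  finally show ?thesis by (simp add: sum_nonneg)
qed

lemma det_pos:
  fixes N :: "complex^'n^'n" and \<sigma> :: real
  assumes "\<sigma> > 0" "herm N = N" "\<And>x. Re (hdot x (N *v x)) \<ge> 0"
  shows "Re (det ((\<sigma>^2) *\<^sub>R idm + N)) > 0"
proof -
  define M where "M s = (\<sigma>^2) *\<^sub>R idm + s *\<^sub>R N" for s :: real
  have idm: "idm = mat 1" by (simp add: idm_def mat_def vec_eq_iff)
  have real: "Im (det (M s)) = 0" for s
  proof -
    have "herm (M s) = M s" by (simp add: M_def herm_add herm_scaleR herm_idm assms(2))
    then have "cnj (det (M s)) = det (M s)" by (metis det_herm)
    from arg_cong[OF this, of Im] show ?thesis by simp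
  qed
  have nz: "det (M s) \<noteq> 0" if "s \<ge> 0" for s
  proof
    assume "det (M s) = 0"
    then have "\<not> invertible (M s)" by (simp add: invertible_det_nz)
    then obtain x where x: "M s *v x = 0" "x \<noteq> 0"
      unfolding invertible_left_inverse matrix_left_invertible_ker by blast
    have "hdot x (M s *v x) = (\<sigma>^2) *\<^sub>R hdot x x + s *\<^sub>R hdot x (N *v x)"
      by (simp add: M_def matrix_vector_mult_add_rdistrib hdot_add idm hdot_scaleR
          scaleR_mv)
    then have "Re (hdot x (M s *v x)) = \<sigma>^2 * (norm x)\<^sup>2 + s * Re (hdot x (N *v x))"
      by (simp add: hdot_self)
    moreover have "\<sigma>^2 * (norm x)\<^sup>2 > 0" using x(2) assms(1) by simp
    moreover have "s * Re (hdot x (N *v x)) \<ge> 0" using that assms(3) by simp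
    ultimately have "Re (hdot x (M s *v x)) > 0" by linarith
    then show False using x(1) by (simp add: hdot_def)
  qed
  have cont: "isCont (\<lambda>s. Re (det (M s))) s" for s
  proof -
    have "(\<lambda>s. M s) differentiable (at s)"
      unfolding M_def by (intro differentiable_add differentiable_const differentiable_scaleR differentiable_ident)
    then have "(\<lambda>s. det (M s)) differentiable (at s)" by (rule diff_det)
    then have "isCont (\<lambda>s. det (M s)) s" by (rule differentiable_imp_continuous_within)
    then show ?thesis by (rule continuous_Re)
  qed
  have f0: "Re (det (M 0)) > 0"
  proof -
    have d: "M 0 $ i $ j = (if i = j then complex_of_real (\<sigma>^2) else 0)" for i j
      by (simp add: M_def idm_def of_real_def)
    have "det (M 0) = (\<Prod>i\<in>(UNIV::'n set). complex_of_real (\<sigma>^2))"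
      by (subst det_diagonal) (auto simp: d)
    also have "\<dots> = complex_of_real ((\<sigma>^2) ^ CARD('n))"
      by (simp only: prod_constant of_real_power)
    finally have "Re (det (M 0)) = (\<sigma>^2) ^ CARD('n)" by (simp only: Re_complex_of_real)
    then show ?thesis using assms(1) by simp
  qed
  show ?thesis
  proof (rule ccontr)
    assume "\<not> ?thesis"
    then have "Re (det (M 1)) \<le> 0" by (simp add: M_def)
    have "\<exists>s. 0 \<le> s \<and> s \<le> 1 \<and> Re (det (M s)) = 0"
      using IVT2[of "\<lambda>s. Re (det (M s))" 1 0 0] f0 cont \<open>Re (det (M 1)) \<le> 0\<close> by auto
    then obtain s where s: "0 \<le> s" "s \<le> 1" "Re (det (M s)) = 0"
      by blast
    then have "det (M s) = 0" using real[of s] by (simp add: complex_eq_iff)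
    then show False using nz s by blast
  qed
qed



lemma diff_logdet:
  fixes f :: "'a::real_normed_vector \<Rightarrow> complex^'n^'n"
  assumes "f differentiable (at x)" "Re (det (f x)) > 0"
  shows "(\<lambda>x. logdet (f x)) differentiable (at x)"
proof -
  have g: "(\<lambda>x. Re (det (f x))) differentiable (at x)"
    by (rule diff_bl[OF bounded_linear_Re diff_det[OF assms(1)]])
  have "(ln has_derivative (*) (inverse (Re (det (f x))))) (at (Re (det (f x))))"
    using DERIV_ln[OF assms(2)] by (simp add: has_field_derivative_def)
  then have l: "ln differentiable (at (Re (det (f x))))"
    unfolding differentiable_def by blast
  have "(ln \<circ> (\<lambda>x. Re (det (f x)))) differentiable (at x)"
    by (rule differentiable_chain_at[OF g l])
  then show ?thesis by (simp add: logdet_def o_def)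
qed

lemma herm_N: "herm (H ** (\<Sum>j\<in>J. W j ** herm (W j)) ** herm H) = H ** (\<Sum>j\<in>J. W j ** herm (W j)) ** herm H"
  by (simp add: herm_mult herm_sum matrix_mul_assoc)

lemma psd_N: "Re (hdot x ((H ** (\<Sum>j\<in>J. W j ** herm (W j)) ** herm H) *v x)) \<ge> 0"
proof -
  have "(H ** (\<Sum>j\<in>J. W j ** herm (W j)) ** herm H) *v x = H *v ((\<Sum>j\<in>J. W j ** herm (W j)) *v (herm H *v x))"
    by (simp add: matrix_vector_mul_assoc matrix_mul_assoc)
  then have "hdot x ((H ** (\<Sum>j\<in>J. W j ** herm (W j)) ** herm H) *v x)
     = hdot (herm H *v x) ((\<Sum>j\<in>J. W j ** herm (W j)) *v (herm H *v x))"
    by (simp only: hdot_adj)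
  then show ?thesis using psd_sum[where x="herm H *v x" and J=J and W=W] by simp
qed

lemma WSR_diff:
  fixes \<omega> :: "'k::finite \<Rightarrow> real" and \<sigma>0 :: real
    and D :: "'k \<Rightarrow> complex^'t^'r" and U :: "'k \<Rightarrow> complex^'s^'r"
    and G :: "complex^'t^'s" and W :: "'k \<Rightarrow> complex^'d^'t"
  assumes "\<sigma>0 > 0"
  shows "WSR \<omega> \<sigma>0 D U G W differentiable (at \<theta>)"
proof -
  have M: "(\<lambda>\<theta>. (\<sigma>0^2) *\<^sub>R idm + chan (D k) (U k) G \<theta> ** Wb ** herm (chan (D k) (U k) G \<theta>))
      differentiable (at \<theta>)" for k and Wb :: "complex^'t^'t"
    by (intro differentiable_add differentiable_const diff_mmult diff_herm diff_chan)
  have P: "Re (det ((\<sigma>0^2) *\<^sub>R idm + chan (D k) (U k) G \<theta> ** (\<Sum>j\<in>J. W j ** herm (W j))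
       ** herm (chan (D k) (U k) G \<theta>))) > 0" for k J
    by (rule det_pos[OF assms herm_N psd_N])
  have "(\<lambda>\<theta>. \<Sum>k\<in>UNIV. \<omega> k *
        (logdet ((\<sigma>0^2) *\<^sub>R idm
                 + chan (D k) (U k) G \<theta> ** (\<Sum>j\<in>UNIV. W j ** herm (W j)) ** herm (chan (D k) (U k) G \<theta>))
       - logdet ((\<sigma>0^2) *\<^sub>R idm
                 + chan (D k) (U k) G \<theta> ** (\<Sum>j\<in>UNIV - {k}. W j ** herm (W j)) ** herm (chan (D k) (U k) G \<theta>))))
     differentiable (at \<theta>)"
    by (intro differentiable_sum finite ballI differentiable_mult differentiable_const differentiable_diff
        diff_logdet M P)
  then show ?thesis unfolding WSR_def[abs_def] .
qed

lemma cscaleR: "t *\<^sub>R (z::complex) = complex_of_real t * z"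
  by (simp add: scaleR_conv_of_real)

lemma scal_real: "complex_of_real t *s v = t *\<^sub>R (v :: complex^'n)"
  by (simp add: vec_eq_iff cscaleR del: scaleR_conv_of_real)

lemma scal_imag: "(\<i> * complex_of_real t) *s v = t *\<^sub>R (\<i> *s (v :: complex^'n))"
  by (simp add: vec_eq_iff cscaleR mult_ac del: scaleR_conv_of_real)

lemma deriv_dir:
  fixes f :: "complex^'n \<Rightarrow> real"
  assumes "(f has_derivative L) (at \<theta>)"
  shows "deriv (\<lambda>t. f (\<theta> + t *\<^sub>R e)) 0 = L e"
proof -
  have "((\<lambda>t. \<theta> + t *\<^sub>R e) has_derivative (\<lambda>t. t *\<^sub>R e)) (at 0)"
    by (auto intro!: derivative_eq_intros)
  moreover have "(f has_derivative L) (at (\<theta> + (0::real) *\<^sub>R e))" using assms by simp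
  ultimately have "((\<lambda>t. f (\<theta> + t *\<^sub>R e)) has_derivative (\<lambda>t. L (t *\<^sub>R e))) (at 0)"
    by (rule has_derivative_compose)
  moreover have "L (t *\<^sub>R e) = t * L e" for t
    using assms has_derivative_bounded_linear linear_scale
    by (metis bounded_linear.linear real_scaleR_def)
  ultimately have "((\<lambda>t. f (\<theta> + t *\<^sub>R e)) has_field_derivative L e) (at 0)"
    by (intro has_derivative_imp_has_field_derivative) (auto simp: mult.commute)
  then show ?thesis by (rule DERIV_imp_deriv)
qed

lemma cgrad_rep:
  fixes f :: "complex^'n \<Rightarrow> real"
  assumes "(f has_derivative L) (at \<theta>)"
  shows "L v = (\<Sum>n\<in>UNIV. 2 * Re (cnj (cgrad f \<theta> $ n) * v $ n))"
proof -
  have lin: "linear L" using assms has_derivative_linear by blast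
  have g: "cgrad f \<theta> $ n = (1/2) * (complex_of_real (L (axis n 1)) + \<i> * complex_of_real (L (\<i> *s axis n 1)))" for n
    unfolding cgrad_def using deriv_dir[OF assms]
    by (simp add: scal_real scal_imag)
  have v: "v = (\<Sum>n\<in>UNIV. Re (v $ n) *\<^sub>R axis n 1 + Im (v $ n) *\<^sub>R (\<i> *s axis n (1::complex)))"
  proof -
    have "(\<Sum>n\<in>UNIV. Re (v $ n) *\<^sub>R axis n 1 + Im (v $ n) *\<^sub>R (\<i> *s axis n (1::complex))) $ j = v $ j" for j
    proof -
      have "(\<Sum>n\<in>UNIV. Re (v $ n) *\<^sub>R axis n 1 + Im (v $ n) *\<^sub>R (\<i> *s axis n (1::complex))) $ j
          = (\<Sum>n\<in>UNIV. if n = j then complex_of_real (Re (v $ n)) + \<i> * complex_of_real (Im (v $ n)) else 0)"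
      proof -
        have e: "\<And>x. complex_of_real (Re (v $ x)) * (if j = x then 1 else 0) + complex_of_real (Im (v $ x)) * (\<i> * (if j = x then 1 else 0))
           = (if x = j then complex_of_real (Re (v $ x)) + \<i> * complex_of_real (Im (v $ x)) else 0)"
          by auto
        show ?thesis
          by (simp add: sum_component axis_def cscaleR e del: scaleR_conv_of_real)
      qed
      also have "\<dots> = v $ j" using complex_eq[of "v $ j"] by simp
      finally show ?thesis .
    qed
    then show ?thesis by (simp add: vec_eq_iff)
  qed
  have "L v = (\<Sum>n\<in>UNIV. Re (v $ n) * L (axis n 1) + Im (v $ n) * L (\<i> *s axis n 1))"
    by (subst v) (simp add: linear_sum[OF lin] linear_add[OF lin] linear_scale[OF lin])
  also have "\<dots> = (\<Sum>n\<in>UNIV. 2 * Re (cnj (cgrad f \<theta> $ n) * v $ n))"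
    by (intro sum.cong refl) (simp add: g)
  finally show ?thesis .
qed



lemma real_ineq:
  fixes a b \<alpha> r :: real
  assumes ab: "a\<^sup>2 + b\<^sup>2 = 1" and \<alpha>: "0 < \<alpha>" "\<alpha> \<le> 1/2"
    and r: "r = sqrt ((1 + \<alpha>*a)\<^sup>2 + (\<alpha>*b)\<^sup>2)"
  shows "(a + \<alpha>)/r - a \<ge> \<alpha> * b\<^sup>2 / 3" and "2 - 2*(1 + \<alpha>*a)/r \<le> 4 * \<alpha>\<^sup>2 * b\<^sup>2"
proof -
  have a1: "\<bar>a\<bar> \<le> 1"
  proof -
    have "0 \<le> b\<^sup>2" by simp
    then have "a\<^sup>2 \<le> 1" using ab by linarith
    then show ?thesis by (simp add: abs_square_le_1)
  qed
  have "-\<alpha> \<le> \<alpha> * a"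
  proof -
    have "\<alpha> * (-1) \<le> \<alpha> * a" using a1 \<alpha> by (intro mult_left_mono) auto
    then show ?thesis by simp
  qed
  then have p: "1 + \<alpha>*a \<ge> 1/2" using \<alpha> by linarith
  have r2: "r\<^sup>2 = (1 + \<alpha>*a)\<^sup>2 + (\<alpha>*b)\<^sup>2" using r by simp
  have rge: "r \<ge> 1 + \<alpha>*a"
    unfolding r by (rule real_le_rsqrt) simp
  have r2': "r\<^sup>2 = 1 + 2*\<alpha>*a + \<alpha>\<^sup>2"
  proof -
    have "r\<^sup>2 = 1 + 2*\<alpha>*a + \<alpha>\<^sup>2 * (a\<^sup>2 + b\<^sup>2)" using r2 by (simp add: power2_eq_square algebra_simps)
    then show ?thesis using ab by simp
  qed
  have rle: "r \<le> 1 + \<alpha>"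
  proof -
    have "a \<le> 1" using a1 by (rule abs_le_D1)
    then have "\<alpha> * a \<le> \<alpha> * 1" using \<alpha> by (intro mult_left_mono) auto
    then have "\<alpha> * a \<le> \<alpha>" by simp
    moreover have "(1 + \<alpha>)\<^sup>2 = 1 + 2*\<alpha> + \<alpha>\<^sup>2" by (simp add: power2_eq_square algebra_simps)
    ultimately have "r\<^sup>2 \<le> (1 + \<alpha>)\<^sup>2" using r2' by linarith
    then show ?thesis using power2_le_imp_le[of r "1 + \<alpha>"] \<alpha> by simp
  qed
  define \<delta> where "\<delta> = r - (1 + \<alpha>*a)"
  have d0: "\<delta> \<ge> 0" using rge by (simp add: \<delta>_def)
  have dprod: "\<delta> * (r + (1 + \<alpha>*a)) = (\<alpha>*b)\<^sup>2"
    using r2 by (simp add: \<delta>_def power2_eq_square algebra_simps)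
  have rpos: "r \<ge> 1/2" using rge p by linarith
  have dle: "\<delta> \<le> (\<alpha>*b)\<^sup>2"
  proof -
    have "\<delta> * 1 \<le> \<delta> * (r + (1 + \<alpha>*a))" using d0 rpos p by (intro mult_left_mono) auto
    then show ?thesis using dprod by simp
  qed
  have ad: "a * \<delta> \<le> \<delta>"
  proof -
    have "a \<le> 1" using a1 by (rule abs_le_D1)
    then have "a * \<delta> \<le> 1 * \<delta>" using d0 by (intro mult_right_mono) auto
    then show ?thesis by simp
  qed
  have ab2: "(\<alpha>*b)\<^sup>2 \<le> \<alpha> * b\<^sup>2 / 2"
  proof -
    have "\<alpha> * (\<alpha> * b\<^sup>2) \<le> (1/2) * (\<alpha> * b\<^sup>2)" using \<alpha> by (intro mult_right_mono) auto
    then show ?thesis by (simp add: power2_eq_square algebra_simps)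
  qed
  have num: "(a + \<alpha>) - a * r = \<alpha> * b\<^sup>2 - a * \<delta>"
  proof -
    have e1: "a*\<delta> = a*r - a - \<alpha>*a\<^sup>2" by (simp add: \<delta>_def power2_eq_square algebra_simps)
    have "b\<^sup>2 = 1 - a\<^sup>2" using ab by linarith
    then have "\<alpha>*b\<^sup>2 = \<alpha>*(1 - a\<^sup>2)" by simp
    then have e2: "\<alpha>*b\<^sup>2 = \<alpha> - \<alpha>*a\<^sup>2" by (simp add: right_diff_distrib)
    show ?thesis using e1 e2 by linarith
  qed
  have numge: "(a + \<alpha>) - a * r \<ge> \<alpha> * b\<^sup>2 / 2" using num ad dle ab2 by linarith
  have "(a + \<alpha>)/r - a = ((a + \<alpha>) - a * r) / r" using rpos by (simp add: field_simps)
  also have "\<dots> \<ge> (\<alpha> * b\<^sup>2 / 2) / r" using numge rpos by (intro divide_right_mono) auto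
  also have "(\<alpha> * b\<^sup>2 / 2) / r \<ge> (\<alpha> * b\<^sup>2 / 2) / (3/2)"
    using rpos rle \<alpha> by (intro divide_left_mono) auto
  finally show "(a + \<alpha>)/r - a \<ge> \<alpha> * b\<^sup>2 / 3" by simp
  have "2 - 2*(1 + \<alpha>*a)/r = 2 * \<delta> / r" using rpos by (simp add: \<delta>_def field_simps)
  also have "\<dots> \<le> 2 * (\<alpha>*b)\<^sup>2 / r" using dle rpos by (intro divide_right_mono) auto
  also have "\<dots> \<le> 2 * (\<alpha>*b)\<^sup>2 / (1/2)" using rpos by (intro divide_left_mono) auto
  finally show "2 - 2*(1 + \<alpha>*a)/r \<le> 4 * \<alpha>\<^sup>2 * b\<^sup>2" by (simp add: power2_eq_square mult_ac)
qed

lemma cplx_ineq: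
  fixes w :: complex and \<alpha> :: real
  assumes w: "cmod w = 1" and \<alpha>: "0 < \<alpha>" "\<alpha> \<le> 1/2"
  defines "z \<equiv> (1 + complex_of_real \<alpha> * w) / complex_of_real (cmod (1 + complex_of_real \<alpha> * w))"
  shows "Re (cnj w * (z - 1)) \<ge> \<alpha> * (Im w)\<^sup>2 / 3" and "(cmod (z - 1))\<^sup>2 \<le> 4 * \<alpha>\<^sup>2 * (Im w)\<^sup>2"
proof -
  define a where "a = Re w"
  define b where "b = Im w"
  define r where "r = cmod (1 + complex_of_real \<alpha> * w)"
  have ab: "a\<^sup>2 + b\<^sup>2 = 1" using w cmod_power2[of w] unfolding a_def b_def by simp
  have rr: "r = sqrt ((1 + \<alpha>*a)\<^sup>2 + (\<alpha>*b)\<^sup>2)" unfolding r_def a_def b_def cmod_def by simp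
  note I = real_ineq[OF ab \<alpha> rr]
  have rpos: "r > 0"
  proof -
    have "r \<ge> 1 + \<alpha>*a" unfolding rr by (rule real_le_rsqrt) simp
    moreover have "\<bar>a\<bar> \<le> 1" using w abs_Re_le_cmod[of w] unfolding a_def by simp
    then have "-1 \<le> a" by linarith
    then have "\<alpha> * (-1) \<le> \<alpha> * a" using \<alpha> by (intro mult_left_mono) auto
    then have "-\<alpha> \<le> \<alpha> * a" by simp
    ultimately show ?thesis using \<alpha> by linarith
  qed
  have zRe: "Re z = (1 + \<alpha>*a)/r" and zIm: "Im z = \<alpha>*b/r"
    unfolding z_def r_def[symmetric] a_def b_def by (simp_all add: Re_divide_of_real Im_divide_of_real)
  have "Re (cnj w * (z - 1)) = a * Re z + b * Im z - a"
    by (simp add: a_def b_def algebra_simps)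
  also have "\<dots> = (a + \<alpha>*(a\<^sup>2+b\<^sup>2))/r - a" using rpos
    by (simp add: zRe zIm field_simps power2_eq_square)
  also have "\<dots> = (a + \<alpha>)/r - a" using ab by simp
  finally show "Re (cnj w * (z - 1)) \<ge> \<alpha> * (Im w)\<^sup>2 / 3" using I(1) by (simp add: b_def)
  have "(cmod (z - 1))\<^sup>2 = (Re z - 1)\<^sup>2 + (Im z)\<^sup>2" by (simp add: cmod_power2)
  also have "\<dots> = ((1 + \<alpha>*a)\<^sup>2 + (\<alpha>*b)\<^sup>2)/r\<^sup>2 - 2*(1 + \<alpha>*a)/r + 1" using rpos
    by (simp add: zRe zIm field_simps power2_eq_square)
  also have "((1 + \<alpha>*a)\<^sup>2 + (\<alpha>*b)\<^sup>2) = r\<^sup>2" using rr by simp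
  also have "r\<^sup>2/r\<^sup>2 = 1" using rpos by simp
  finally show "(cmod (z - 1))\<^sup>2 \<le> 4 * \<alpha>\<^sup>2 * (Im w)\<^sup>2" using I(2) by (simp add: b_def)
qed



lemma near_unique:
  fixes x p :: complex
  assumes x: "x \<noteq> 0" and p: "cmod p = 1"
    and le: "cmod (x - p) \<le> cmod (x - x / complex_of_real (cmod x))"
  shows "p = x / complex_of_real (cmod x)"
proof -
  define u where "u = Re x"
  define v where "v = Im x"
  define c where "c = Re p"
  define d where "d = Im p"
  define s where "s = cmod x"
  have spos: "s > 0" using x by (simp add: s_def)
  have s2: "s\<^sup>2 = u\<^sup>2 + v\<^sup>2" unfolding s_def u_def v_def by (rule cmod_power2)
  have p2: "c\<^sup>2 + d\<^sup>2 = 1" using p cmod_power2[of p] unfolding c_def d_def by simp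
  have dist: "(cmod (x - p))\<^sup>2 = (u - c)\<^sup>2 + (v - d)\<^sup>2"
    unfolding u_def v_def c_def d_def by (simp add: cmod_power2)
  have "x - x / complex_of_real s = complex_of_real (1 - 1/s) * x"
    using spos by (simp add: field_simps)
  then have "cmod (x - x / complex_of_real s) = \<bar>1 - 1/s\<bar> * s"
    by (simp only: norm_mult norm_of_real s_def[symmetric])
  also have "\<dots> = \<bar>s - 1\<bar>"
  proof -
    have "\<bar>1 - 1/s\<bar> * s = \<bar>(1 - 1/s) * s\<bar>" using spos by (simp add: abs_mult)
    also have "(1 - 1/s) * s = s - 1" using spos by (simp add: field_simps)
    finally show ?thesis .
  qed
  finally have d2: "cmod (x - x / complex_of_real s) = \<bar>s - 1\<bar>" .
  have "(cmod (x - p))\<^sup>2 \<le> (\<bar>s - 1\<bar>)\<^sup>2"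
    using le d2 unfolding s_def by (intro power_mono) auto
  then have ineq: "(u - c)\<^sup>2 + (v - d)\<^sup>2 \<le> (s - 1)\<^sup>2" using dist by simp
  define t where "t = u * c + v * d"
  have e1: "(u - c)\<^sup>2 + (v - d)\<^sup>2 = (u\<^sup>2 + v\<^sup>2) + (c\<^sup>2 + d\<^sup>2) - 2 * t"
    unfolding t_def by (simp add: power2_eq_square algebra_simps)
  have e2: "(s - 1)\<^sup>2 = s\<^sup>2 - 2 * s + 1" by (simp add: power2_eq_square algebra_simps)
  have tge: "t \<ge> s" using ineq e1 e2 s2 p2 by linarith
  have lag: "t\<^sup>2 + (u * d - v * c)\<^sup>2 = (u\<^sup>2 + v\<^sup>2) * (c\<^sup>2 + d\<^sup>2)"
    unfolding t_def by (simp add: power2_eq_square algebra_simps)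
  then have lag': "t\<^sup>2 + (u * d - v * c)\<^sup>2 = s\<^sup>2" using s2 p2 by simp
  have "s\<^sup>2 \<le> t\<^sup>2" using tge spos by (intro power_mono) auto
  then have "(u * d - v * c)\<^sup>2 \<le> 0" using lag' by linarith
  then have cross: "u * d = v * c" by simp
  have "t\<^sup>2 \<le> s\<^sup>2" using lag' by (metis le_add_same_cancel1 zero_le_power2)
  then have "t \<le> s" using spos power2_le_imp_le[of t s] by simp
  then have ts: "t = s" using tge by simp
  have sc: "s * c = u"
  proof -
    have "s * c = (u * c + v * d) * c" using ts t_def by simp
    also have "\<dots> = u * c\<^sup>2 + (v * c) * d" by (simp add: power2_eq_square algebra_simps)
    also have "\<dots> = u * c\<^sup>2 + (u * d) * d" using cross by simp
    also have "\<dots> = u * (c\<^sup>2 + d\<^sup>2)" by (simp add: power2_eq_square algebra_simps)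
    finally show ?thesis using p2 by simp
  qed
  have sd: "s * d = v"
  proof -
    have "s * d = (u * c + v * d) * d" using ts t_def by simp
    also have "\<dots> = (u * d) * c + v * d\<^sup>2" by (simp add: power2_eq_square algebra_simps)
    also have "\<dots> = (v * c) * c + v * d\<^sup>2" using cross by simp
    also have "\<dots> = v * (c\<^sup>2 + d\<^sup>2)" by (simp add: power2_eq_square algebra_simps)
    finally show ?thesis using p2 by simp
  qed
  show ?thesis
  proof (rule complex_eqI)
    show "Re p = Re (x / complex_of_real (cmod x))"
      using sc spos unfolding c_def u_def s_def by (simp add: Re_divide_of_real field_simps)
    show "Im p = Im (x / complex_of_real (cmod x))"
      using sd spos unfolding d_def v_def s_def by (simp add: Im_divide_of_real field_simps)
  qed
qed

lemma norm_sq_vec: "(norm (v :: complex^'n))\<^sup>2 = (\<Sum>i\<in>UNIV. (cmod (v$i))\<^sup>2)"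
  by (simp add: norm_vec_def L2_set_def sum_nonneg)

lemma proj_eq:
  assumes P: "is_proj_Q P" and x: "\<And>n. x$n \<noteq> 0"
  shows "P x = (\<chi> n. x$n / complex_of_real (cmod (x$n)))"
proof (rule ccontr)
  define q where "q = (\<chi> n. x$n / complex_of_real (cmod (x$n)))"
  assume ne: "P x \<noteq> (\<chi> n. x$n / complex_of_real (cmod (x$n)))"
  then obtain n where n: "P x $ n \<noteq> q $ n" unfolding q_def by (auto simp: vec_eq_iff)
  have q: "q \<in> unitmod" using x by (simp add: q_def unitmod_def norm_divide)
  have pQ: "P x \<in> unitmod" and pmin: "norm (x - P x) \<le> norm (x - q)"
    using P q unfolding is_proj_Q_def by auto
  have p1: "cmod (P x $ i) = 1" for i using pQ by (simp add: unitmod_def)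
  have le: "cmod (x$i - q$i) \<le> cmod (x$i - P x $ i)" for i
  proof -
    have "cmod (x$i - q$i) = \<bar>cmod (x$i) - 1\<bar>"
    proof -
      have "x$i - q$i = complex_of_real (1 - 1/cmod (x$i)) * x$i"
        using x[of i] by (simp add: q_def field_simps)
      then have "cmod (x$i - q$i) = \<bar>1 - 1/cmod (x$i)\<bar> * cmod (x$i)" by (simp only: norm_mult norm_of_real)
      also have "\<dots> = \<bar>(1 - 1/cmod (x$i)) * cmod (x$i)\<bar>" by (simp add: abs_mult)
      also have "(1 - 1/cmod (x$i)) * cmod (x$i) = cmod (x$i) - 1" using x[of i] by (simp add: field_simps)
      finally show ?thesis .
    qed
    also have "\<dots> \<le> cmod (x$i - P x $ i)" using norm_triangle_ineq3[of "x$i" "P x $ i"] p1[of i] by simp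
    finally show ?thesis .
  qed
  have lt: "cmod (x$n - q$n) < cmod (x$n - P x $ n)"
  proof (rule ccontr)
    assume "\<not> ?thesis"
    then have "cmod (x$n - P x $ n) \<le> cmod (x$n - x$n / complex_of_real (cmod (x$n)))"
      by (simp add: q_def)
    then have "P x $ n = x$n / complex_of_real (cmod (x$n))" by (rule near_unique[OF x p1])
    then show False using n by (simp add: q_def)
  qed
  have "(\<Sum>i\<in>UNIV. (cmod ((x - q)$i))\<^sup>2) < (\<Sum>i\<in>UNIV. (cmod ((x - P x)$i))\<^sup>2)"
  proof (rule sum_strict_mono_ex1)
    show "\<forall>i\<in>UNIV. (cmod ((x - q)$i))\<^sup>2 \<le> (cmod ((x - P x)$i))\<^sup>2"
      using le by (auto intro!: power_mono)
    show "\<exists>i\<in>UNIV. (cmod ((x - q)$i))\<^sup>2 < (cmod ((x - P x)$i))\<^sup>2"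
      using lt by (intro bexI[of _ n]) (auto intro!: power_strict_mono)
  qed simp
  then have "(norm (x - q))\<^sup>2 < (norm (x - P x))\<^sup>2" by (simp only: norm_sq_vec)
  moreover have "(norm (x - P x))\<^sup>2 \<le> (norm (x - q))\<^sup>2" using pmin by (intro power_mono) auto
  ultimately show False by simp
qed



lemma Xi_mult: "(Xi g *v g) $ n = g$n / complex_of_real (cmod (g$n))"
proof -
  have "(Xi g *v g) $ n = (\<Sum>j\<in>UNIV. (if n = j then complex_of_real (1 / cmod (g$n)) * g$j else 0))"
    apply (simp only: Xi_def diagm_def matrix_vector_mult_def vec_lambda_beta)
    by (intro sum.cong refl) auto
  also have "\<dots> = complex_of_real (1 / cmod (g$n)) * g$n" by simp
  also have "\<dots> = g$n / complex_of_real (cmod (g$n))" by (simp add: divide_inverse mult.commute of_real_inverse)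
  finally show ?thesis .
qed

lemma main:
  fixes R :: "complex^'s \<Rightarrow> real" and P :: "complex^'s \<Rightarrow> complex^'s"
  assumes L: "(R has_derivative L) (at \<theta>)"
    and P: "is_proj_Q P" and th: "\<theta> \<in> unitmod"
    and \<eta>: "0 < \<eta>" "\<eta> < 1" and \<beta>: "\<beta> > 0" and c: "c > 0"
  shows "\<exists>m::nat. R (P (\<theta> + complex_of_real (c * \<eta> ^ m) *s (Xi (cgrad R \<theta>) *v cgrad R \<theta>)))
     \<ge> R \<theta> + \<beta> / (2 * real CARD('s)) *
       (norm (P (\<theta> + complex_of_real (c * \<eta> ^ m) *s (Xi (cgrad R \<theta>) *v cgrad R \<theta>)) - \<theta>))\<^sup>2"
proof -
  define g where "g = cgrad R \<theta>"
  define u where "u = Xi g *v g"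
  have un: "u$n = g$n / complex_of_real (cmod (g$n))" for n unfolding u_def by (rule Xi_mult)
  have Lrep: "L v = (\<Sum>n\<in>UNIV. 2 * Re (cnj (g $ n) * v $ n))" for v
    unfolding g_def by (rule cgrad_rep[OF L])
  have th1: "cmod (\<theta>$n) = 1" for n using th by (simp add: unitmod_def)
  have thc: "\<theta>$n * cnj (\<theta>$n) = 1" for n
    using complex_norm_square[of "\<theta>$n"] th1[of n] by simp
  define w where "w n = u$n * cnj (\<theta>$n)" for n
  define b where "b n = Im (w n)" for n
  have wn: "cmod (w n) = 1" if "g$n \<noteq> 0" for n
    using that th1[of n] by (simp add: w_def un norm_mult norm_divide)
  have w0: "w n = 0" if "g$n = 0" for n using that by (simp add: w_def un)
  have b0: "g$n \<noteq> 0" if "b n \<noteq> 0" for n using that w0 by (auto simp: b_def)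
  have gw: "cnj (g$n) * \<theta>$n = complex_of_real (cmod (g$n)) * cnj (w n)" for n
  proof (cases "g$n = 0")
    case True then show ?thesis by simp
  next
    case False
    have "complex_of_real (cmod (g$n)) * cnj (w n) = complex_of_real (cmod (g$n)) * (cnj (g$n) / complex_of_real (cmod (g$n))) * \<theta>$n"
      by (simp add: w_def un mult.assoc)
    also have "\<dots> = cnj (g$n) * \<theta>$n" using False by simp
    finally show ?thesis by simp
  qed
  define x where "x \<alpha> = \<theta> + complex_of_real \<alpha> *s u" for \<alpha>
  define z where "z \<alpha> n = (1 + complex_of_real \<alpha> * w n) / complex_of_real (cmod (1 + complex_of_real \<alpha> * w n))" for \<alpha> n
  define d where "d \<alpha> = P (x \<alpha>) - \<theta>" for \<alpha>
  have xn: "x \<alpha> $ n = \<theta>$n * (1 + complex_of_real \<alpha> * w n)" for \<alpha> n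
  proof -
    have "\<theta>$n * (1 + complex_of_real \<alpha> * w n) = \<theta>$n + complex_of_real \<alpha> * u$n * (\<theta>$n * cnj (\<theta>$n))"
      by (simp add: w_def algebra_simps)
    then show ?thesis by (simp add: x_def thc)
  qed
  have wle: "cmod (w n) \<le> 1" for n using wn w0 by (cases "g$n = 0") auto
  have onepos: "cmod (1 + complex_of_real \<alpha> * w n) \<ge> 1/2" if "0 < \<alpha>" "\<alpha> \<le> 1/2" for \<alpha> n
  proof -
    have "cmod (complex_of_real \<alpha> * w n) \<le> \<alpha>"
      using that wle[of n] by (simp add: norm_mult mult_left_le)
    moreover have "1 - cmod (complex_of_real \<alpha> * w n) \<le> cmod (1 + complex_of_real \<alpha> * w n)"
      using norm_diff_ineq[of 1 "complex_of_real \<alpha> * w n"] by simp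
    ultimately show ?thesis using that by linarith
  qed
  have dn: "d \<alpha> $ n = \<theta>$n * (z \<alpha> n - 1)" if "0 < \<alpha>" "\<alpha> \<le> 1/2" for \<alpha> n
  proof -
    have nz: "x \<alpha> $ k \<noteq> 0" for k
      using onepos[OF that, of k] th1[of k] by (auto simp: xn)
    have "P (x \<alpha>) $ n = x \<alpha> $ n / complex_of_real (cmod (x \<alpha> $ n))"
      using proj_eq[OF P nz] by simp
    also have "\<dots> = \<theta>$n * z \<alpha> n"
      by (simp add: xn z_def norm_mult th1)
    finally show ?thesis by (simp add: d_def algebra_simps)
  qed
  have bndA: "Re (cnj (g$n) * d \<alpha> $ n) \<ge> cmod (g$n) * (\<alpha> * (b n)\<^sup>2 / 3)"
    if "0 < \<alpha>" "\<alpha> \<le> 1/2" for \<alpha> n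
  proof -
    have "cnj (g$n) * d \<alpha> $ n = complex_of_real (cmod (g$n)) * (cnj (w n) * (z \<alpha> n - 1))"
      using dn[OF that, of n] gw[of n] by (simp add: mult.assoc[symmetric])
    then have e: "Re (cnj (g$n) * d \<alpha> $ n) = cmod (g$n) * Re (cnj (w n) * (z \<alpha> n - 1))" by simp
    show ?thesis
    proof (cases "g$n = 0")
      case True then show ?thesis by simp
    next
      case False
      have "Re (cnj (w n) * (z \<alpha> n - 1)) \<ge> \<alpha> * (b n)\<^sup>2 / 3"
        unfolding z_def b_def by (rule cplx_ineq(1)[OF wn[OF False] that])
      then show ?thesis unfolding e by (intro mult_left_mono) auto
    qed
  qed
  have bndB: "(cmod (d \<alpha> $ n))\<^sup>2 \<le> 4 * \<alpha>\<^sup>2 * (b n)\<^sup>2" if "0 < \<alpha>" "\<alpha> \<le> 1/2" for \<alpha> n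
  proof -
    have e: "cmod (d \<alpha> $ n) = cmod (z \<alpha> n - 1)" using dn[OF that, of n] th1[of n] by (simp add: norm_mult)
    show ?thesis
    proof (cases "g$n = 0")
      case True then show ?thesis using w0[OF True] by (simp add: e z_def)
    next
      case False
      show ?thesis unfolding e z_def b_def by (rule cplx_ineq(2)[OF wn[OF False] that])
    qed
  qed
  define S where "S = (\<Sum>n\<in>UNIV. cmod (g$n) * (b n)\<^sup>2)"
  define T where "T = (\<Sum>n\<in>UNIV. (b n)\<^sup>2)"
  have LdA: "L (d \<alpha>) \<ge> 2/3 * \<alpha> * S" if "0 < \<alpha>" "\<alpha> \<le> 1/2" for \<alpha>
  proof -
    have "2/3 * \<alpha> * S = (\<Sum>n\<in>UNIV. 2 * (cmod (g$n) * (\<alpha> * (b n)\<^sup>2 / 3)))"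
      unfolding S_def by (simp add: sum_distrib_left algebra_simps)
    also have "\<dots> \<le> (\<Sum>n\<in>UNIV. 2 * Re (cnj (g $ n) * d \<alpha> $ n))"
      by (intro sum_mono mult_left_mono bndA[OF that]) simp
    finally show ?thesis by (simp add: Lrep)
  qed
  have dB: "(norm (d \<alpha>))\<^sup>2 \<le> 4 * \<alpha>\<^sup>2 * T" if "0 < \<alpha>" "\<alpha> \<le> 1/2" for \<alpha>
  proof -
    have "(norm (d \<alpha>))\<^sup>2 = (\<Sum>n\<in>UNIV. (cmod (d \<alpha> $ n))\<^sup>2)" by (rule norm_sq_vec)
    also have "\<dots> \<le> (\<Sum>n\<in>UNIV. 4 * \<alpha>\<^sup>2 * (b n)\<^sup>2)" using bndB[OF that] by (intro sum_mono) auto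
    also have "\<dots> = 4 * \<alpha>\<^sup>2 * T" unfolding T_def by (simp add: sum_distrib_left)
    finally show ?thesis .
  qed
  define \<beta>' where "\<beta>' = \<beta> / (2 * real CARD('s))"
  have \<beta>': "\<beta>' > 0" using \<beta> by (simp add: \<beta>'_def)
  have T0: "T \<ge> 0" unfolding T_def by (simp add: sum_nonneg)
  have S0: "S \<ge> 0" unfolding S_def by (simp add: sum_nonneg)
  have ex_m: "\<exists>m::nat. c * \<eta> ^ m < a" if "a > 0" for a
  proof -
    have "0 < a / c" using that c by simp
    then obtain m where "\<eta> ^ m < a / c" using real_arch_pow_inv[of "a / c" \<eta>] \<eta> by blast
    then have "c * \<eta> ^ m < a" using c by (simp add: field_simps)
    then show ?thesis by blast
  qed
  have goal: "\<exists>m::nat. R (P (x (c * \<eta> ^ m))) \<ge> R \<theta> + \<beta>' * (norm (d (c * \<eta> ^ m)))\<^sup>2"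
  proof (cases "S = 0")
    case True
    have "cmod (g$n) * (b n)\<^sup>2 = 0" for n
      using True unfolding S_def by (subst (asm) sum_nonneg_eq_0_iff) auto
    then have bz: "b n = 0" for n using b0[of n] by auto
    obtain m :: nat where m: "c * \<eta> ^ m < 1/2" using ex_m[of "1/2"] by auto
    define \<alpha> where "\<alpha> = c * \<eta> ^ m"
    have \<alpha>: "0 < \<alpha>" "\<alpha> \<le> 1/2" using m c \<eta> by (auto simp: \<alpha>_def)
    have "(norm (d \<alpha>))\<^sup>2 \<le> 0" using dB[OF \<alpha>] by (simp add: T_def bz)
    then have "d \<alpha> = 0" by simp
    then have "P (x \<alpha>) = \<theta>" by (simp add: d_def)
    then show ?thesis using \<open>d \<alpha> = 0\<close> by (intro exI[of _ m]) (simp add: \<alpha>_def)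
  next
    case False
    then have Spos: "S > 0" using S0 by simp
    have "\<exists>n. cmod (g$n) * (b n)\<^sup>2 \<noteq> 0"
    proof (rule ccontr)
      assume "\<not> (\<exists>n. cmod (g$n) * (b n)\<^sup>2 \<noteq> 0)"
      then have "S = 0" unfolding S_def by (intro sum.neutral) auto
      then show False using Spos by simp
    qed
    then obtain n where "cmod (g$n) * (b n)\<^sup>2 \<noteq> 0" by blast
    then have "(b n)\<^sup>2 > 0" by simp
    moreover have "(b n)\<^sup>2 \<le> T" unfolding T_def by (rule member_le_sum) auto
    ultimately have Tpos: "T > 0" by linarith
    define K where "K = sqrt T"
    have Kpos: "K > 0" using Tpos by (simp add: K_def)
    define \<epsilon> where "\<epsilon> = S / (6 * K)"
    have \<epsilon>: "\<epsilon> > 0" using Spos Kpos by (simp add: \<epsilon>_def)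
    obtain \<delta> where \<delta>: "\<delta> > 0"
      and fr: "\<And>y. norm (y - \<theta>) < \<delta> \<Longrightarrow> norm (R y - R \<theta> - L (y - \<theta>)) \<le> \<epsilon> * norm (y - \<theta>)"
      using L \<epsilon> unfolding has_derivative_at_alt by blast
    define a0 where "a0 = min (1/2) (min (\<delta> / (2 * K)) (S / (12 * T * \<beta>')))"
    have a0: "a0 > 0" using \<delta> Kpos Spos Tpos \<beta>' by (simp add: a0_def)
    obtain m :: nat where m: "c * \<eta> ^ m < a0" using ex_m[OF a0] by auto
    define \<alpha> where "\<alpha> = c * \<eta> ^ m"
    have \<alpha>pos: "0 < \<alpha>" using c \<eta> by (simp add: \<alpha>_def)
    have \<alpha>1: "\<alpha> \<le> 1/2" and \<alpha>2: "\<alpha> < \<delta> / (2 * K)" and \<alpha>3: "\<alpha> \<le> S / (12 * T * \<beta>')"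
      using m unfolding a0_def \<alpha>_def by auto
    note \<alpha> = \<alpha>pos \<alpha>1
    have nd: "norm (d \<alpha>) \<le> 2 * \<alpha> * K"
    proof -
      have "(norm (d \<alpha>))\<^sup>2 \<le> (2 * \<alpha> * K)\<^sup>2"
        using dB[OF \<alpha>] Tpos by (simp add: K_def power_mult_distrib)
      then show ?thesis using \<alpha> Kpos power2_le_imp_le[of "norm (d \<alpha>)" "2 * \<alpha> * K"] by simp
    qed
    have "2 * \<alpha> * K < \<delta>" using \<alpha>2 Kpos by (simp add: field_simps)
    then have "norm (P (x \<alpha>) - \<theta>) < \<delta>" using nd by (simp add: d_def)
    from fr[OF this] have "norm (R (P (x \<alpha>)) - R \<theta> - L (d \<alpha>)) \<le> \<epsilon> * norm (d \<alpha>)"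
      by (simp add: d_def)
    then have r1: "R (P (x \<alpha>)) - R \<theta> \<ge> L (d \<alpha>) - \<epsilon> * norm (d \<alpha>)" by simp
    have "\<epsilon> * norm (d \<alpha>) \<le> \<epsilon> * (2 * \<alpha> * K)" using nd \<epsilon> by (intro mult_left_mono) auto
    also have "\<epsilon> * (2 * \<alpha> * K) = \<alpha> * S / 3" using Kpos by (simp add: \<epsilon>_def field_simps)
    finally have r2: "\<epsilon> * norm (d \<alpha>) \<le> \<alpha> * S / 3" .
    have r3: "R (P (x \<alpha>)) - R \<theta> \<ge> \<alpha> * S / 3" using r1 r2 LdA[OF \<alpha>] by linarith
    have "\<beta>' * (norm (d \<alpha>))\<^sup>2 \<le> \<beta>' * (4 * \<alpha>\<^sup>2 * T)" using dB[OF \<alpha>] \<beta>' by (intro mult_left_mono) auto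
    also have "\<beta>' * (4 * \<alpha>\<^sup>2 * T) = \<alpha> * (\<alpha> * (4 * T * \<beta>'))" by (simp add: power2_eq_square)
    also have "\<dots> \<le> \<alpha> * (S / 3)"
    proof -
      have "\<alpha> * (12 * T * \<beta>') \<le> S" using \<alpha>3 Tpos \<beta>' by (simp add: field_simps)
      then have "\<alpha> * (4 * T * \<beta>') \<le> S / 3" by simp
      then show ?thesis using \<alpha> by (intro mult_left_mono) auto
    qed
    finally have "\<beta>' * (norm (d \<alpha>))\<^sup>2 \<le> \<alpha> * S / 3" by simp
    then show ?thesis using r3 by (intro exI[of _ m]) (simp add: \<alpha>_def[symmetric])
  qed
  then show ?thesis by (simp add: x_def d_def \<beta>'_def u_def g_def)
qed

theorem lemma1:
  fixes \<omega> :: "'k::finite \<Rightarrow> real" and \<sigma>0 :: real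
    and D :: "'k \<Rightarrow> complex^'t^'r" and U :: "'k \<Rightarrow> complex^'s^'r"
    and G :: "complex^'t^'s" and W :: "'k \<Rightarrow> complex^'d^'t"
    and P :: "complex^'s \<Rightarrow> complex^'s" and \<theta>l :: "complex^'s" and \<eta> :: real
  assumes "\<sigma>0 > 0"
    and "is_proj_Q P"
    and "\<theta>l \<in> unitmod"
    and "0 < \<eta>" and "\<eta> < 1"
  shows "\<exists>\<beta>0>0. \<forall>\<beta>. 0 < \<beta> \<and> \<beta> \<le> \<beta>0 \<longrightarrow> (\<forall>c>0. \<exists>m::nat.
      (let R = WSR \<omega> \<sigma>0 D U G W;
           g = cgrad R \<theta>l;
           \<theta>\<alpha> = P (\<theta>l + complex_of_real (c * \<eta> ^ m) *s (Xi g *v g))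
       in R \<theta>\<alpha> \<ge> R \<theta>l + \<beta> / (2 * real CARD('s)) * (norm (\<theta>\<alpha> - \<theta>l))^2))"
proof -
  obtain L where L: "(WSR \<omega> \<sigma>0 D U G W has_derivative L) (at \<theta>l)"
    using WSR_diff[OF assms(1), of \<omega> D U G W \<theta>l] unfolding differentiable_def by blast
  show ?thesis
    unfolding Let_def
    using main[OF L assms(2) assms(3) assms(4) assms(5)] by (intro exI[of _ 1]) auto
qed

end
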